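(* The graphs $G_k$, $k\ge 1$, have unbounded clique-width: for every integer $r$ there exists $k$ such that the clique-width of $G_k$ exceeds $r$. Consequently, the class of strict outerconfluent graphs has unbounded clique-width.
   Context: Clique-width of a graph is the minimum number of colors needed to construct it (up to forgetting colors) by the operations: create a single vertex with any color; take the disjoint union of two colored graphs; recolor all vertices of one color to another color; add all edges between vertices of color $a$ and vertices of color $b$ for two specified colors $a\ne b$. A strict outerconfluent drawing of a graph $G$ consists of finitely many smooth curves (tracks) in a topological disk, disjoint except at shared endpoints, which are vertices of $G$ (lying on the disk boundary) or junctions (where at least three tracks meet with the same tangent). An edge curve is a smooth curve in the union of tracks from a vertex to a vertex passing otherwise only through tracks and junctions. Each pair of adjacent vertices must be joined by exactly one edge curve, no edge curve joins a vertex to itself or two non-adjacent vertices, and every track lies on some edge curve. A strict outerconfluent graph is one with such a drawing. $G_k$ is defined by the following drawing in the closed upper half-plane. Vertices $v_1,\dots,v_{3^k}$ lie left to right on the boundary line, consecutive ones joined by a track along the line; odd-position vertices are blue, even-position ones yellow, and yellow vertices have no other tracks. Remaining tracks lie in levels $0,\dots,k-1$ (horizontal slabs, bottom to top). The bottom line of level $i$ carries points $p_{i,j}$, $0\le j<3^{k-i}/2$, left to right (the blue vertices for $i=0$, junctions for $i>0$), where tracks enter with vertical tangent. In level $i$, consecutive $p_{i,j},p_{i,j+1}$ are joined by a semicircle, subdivided by two junctions into three arcs when $j$ is a multiple of three (except that the single top-level semicircle joining $p_{k-1,0},p_{k-1,1}$ is not subdivided), a single track otherwise. For $i<k-1$ and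 each subdivided semicircle joining $p_{i,j},p_{i,j+1}$, tracks connect its two subdivision junctions to $p_{i+1,j/3}$, oriented so that each one connects $p_{i+1,j/3}$ downward by a smooth curve through the semicircle to $p_{i,j}$ and $p_{i,j+1}$. Two vertices are adjacent in $G_k$ iff some edge curve connects them. (This drawing is a strict outerconfluent drawing, so each $G_k$ is strict outerconfluent.) *)

theory Defs
  imports Main
begin

text \<open>A labelled graph on a vertex set V (subset of the ambient type 'a), with
an edge set E (set of ordered pairs, kept symmetric) and a colouring lab.
cw_constructible k V E lab holds iff (V,E,lab) is the value of an expression
using the four clique-width operations with colours from 0..k-1.
Disjoint union is realised by requiring the two vertex sets to be disjoint
subsets of the ambient type.\<close>

inductive cw_constructible :: "nat \<Rightarrow> 'a set \<Rightarrow> ('a \<times> 'a) set \<Rightarrow> ('a \<Rightarrow> nat) \<Rightarrow> bool"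
  for k :: nat where
  single: "lab v < k \<Longrightarrow> cw_constructible k {v} {} lab"
| union: "cw_constructible k V1 E1 l1 \<Longrightarrow> cw_constructible k V2 E2 l2 \<Longrightarrow> V1 \<inter> V2 = {}
          \<Longrightarrow> cw_constructible k (V1 \<union> V2) (E1 \<union> E2) (\<lambda>v. if v \<in> V1 then l1 v else l2 v)"
| recolor: "cw_constructible k V E l \<Longrightarrow> a < k \<Longrightarrow> b < k
          \<Longrightarrow> cw_constructible k V E (\<lambda>v. if l v = a then b else l v)"
| join: "cw_constructible k V E l \<Longrightarrow> a < k \<Longrightarrow> b < k \<Longrightarrow> a \<noteq> b
          \<Longrightarrow> cw_constructible k V
                (E \<union> {(u, w). u \<in> V \<and> w \<in> V \<and> ((l u = a \<and> l w = b) \<or> (l u = b \<and> l w = a))}) l"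

definition clique_width :: "'a set \<Rightarrow> ('a \<times> 'a) set \<Rightarrow> nat" where
  "clique_width V E = (LEAST k. \<exists>lab. cw_constructible k V E lab)"

text \<open>Vertices v_1..v_{3^k} are represented by 0..3^k-1 (v_{x+1} is x).
Blue vertices are the even x; blue vertex x is the level-0 point p_{0, x div 2}.
The level-0 points below the level-i point p_{i,b} reachable by a descending
smooth curve are b*3^i + s where s < 3^i has all i ternary digits in {0,1}.\<close>

definition below :: "nat \<Rightarrow> nat \<Rightarrow> nat set" where
  "below i b = {b * 3 ^ i + s | s. s < 3 ^ i \<and> (\<forall>t<i. (s div 3 ^ t) mod 3 \<le> 1)}"

definition G_V :: "nat \<Rightarrow> nat set" where
  "G_V k = {0..<3 ^ k}"

definition G_E :: "nat \<Rightarrow> (nat \<times> nat) set" where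
  "G_E k = {(x, y). x < 3 ^ k \<and> y < 3 ^ k \<and>
     (x + 1 = y \<or> y + 1 = x \<or>
      (even x \<and> even y \<and>
        (\<exists>i<k. \<exists>b. (x div 2 \<in> below i b \<and> y div 2 \<in> below i (Suc b)) \<or>
                   (y div 2 \<in> below i b \<and> x div 2 \<in> below i (Suc b)))))}"

end

theory Submission
  imports Defs
begin

definition goodX :: "nat \<Rightarrow> 'a set \<Rightarrow> ('a \<times> 'a) set \<Rightarrow> ('a \<Rightarrow> nat) \<Rightarrow> 'a set \<Rightarrow> bool" where
  "goodX c V E l X \<longleftrightarrow> (\<exists>f. (\<forall>x\<in>X. f x < c) \<and> (\<forall>u\<in>X. \<forall>v\<in>X. f u = f v \<longrightarrow> l u = l v \<and>
          (\<forall>w\<in>V-X. (u,w)\<in>E \<longleftrightarrow> (v,w)\<in>E)))"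

definition cwInv :: "nat \<Rightarrow> 'a set \<Rightarrow> ('a \<times> 'a) set \<Rightarrow> ('a \<Rightarrow> nat) \<Rightarrow> bool" where
  "cwInv c V E l \<longleftrightarrow> finite V \<and> V \<noteq> {} \<and> E \<subseteq> V \<times> V \<and> (\<forall>v\<in>V. l v < c) \<and>
   (\<forall>m. 1 \<le> m \<and> m \<le> card V \<longrightarrow> (\<exists>X. X \<subseteq> V \<and> m \<le> card X \<and> card X < 2*m \<and> goodX c V E l X))"

lemma cw_inv:
  assumes "cw_constructible c V E l"
  shows "cwInv c V E l"
  using assms
proof (induction rule: cw_constructible.induct)
  case (single l v)
  have "\<exists>X. X \<subseteq> {v} \<and> m \<le> card X \<and> card X < 2*m \<and> goodX c {v} {} l X" if "1 \<le> m \<and> m \<le> card {v}" for m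
  proof -
    have m1: "m = 1" using that by simp
    have "goodX c {v} {} l {v}" unfolding goodX_def using single by (intro exI[of _ l]) simp
    then show ?thesis using m1 by (intro exI[of _ "{v}"]) simp
  qed
  then show ?case unfolding cwInv_def using single by simp
next
  case (union V1 E1 l1 V2 E2 l2)
  let ?L = "\<lambda>v. if v \<in> V1 then l1 v else l2 v"
  have fin: "finite V1" "finite V2" using union.IH unfolding cwInv_def by auto
  have disj: "V1 \<inter> V2 = {}" by fact
  have cardU: "card (V1 \<union> V2) = card V1 + card V2" using fin disj card_Un_disjoint by blast
  have E1s: "E1 \<subseteq> V1 \<times> V1" and E2s: "E2 \<subseteq> V2 \<times> V2" using union.IH unfolding cwInv_def by auto
  have lab: "\<forall>v\<in>V1 \<union> V2. ?L v < c" using union.IH unfolding cwInv_def by auto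
  have P2: "\<exists>X. X \<subseteq> V1 \<union> V2 \<and> m \<le> card X \<and> card X < 2*m \<and> goodX c (V1 \<union> V2) (E1 \<union> E2) ?L X"
    if m: "1 \<le> m" "m \<le> card (V1 \<union> V2)" for m
  proof (cases "card (V1 \<union> V2) < 2*m")
    case True
    have "goodX c (V1 \<union> V2) (E1 \<union> E2) ?L (V1 \<union> V2)"
      unfolding goodX_def using lab by (intro exI[of _ ?L]) auto
    then show ?thesis
      using True m by (intro exI[of _ "V1 \<union> V2"]) auto
  next
    case False
    then have "m \<le> card V1 \<or> m \<le> card V2" using cardU by linarith
    then show ?thesis
    proof
      assume h: "m \<le> card V1"
      then obtain X where X: "X \<subseteq> V1" "m \<le> card X" "card X < 2*m" "goodX c V1 E1 l1 X"
        using union.IH(1) m(1) unfolding cwInv_def by blast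
      then obtain f where f: "\<forall>x\<in>X. f x < c"
        "\<forall>u\<in>X. \<forall>v\<in>X. f u = f v \<longrightarrow> l1 u = l1 v \<and> (\<forall>w\<in>V1-X. (u,w)\<in>E1 \<longleftrightarrow> (v,w)\<in>E1)"
        unfolding goodX_def by blast
      have "\<forall>u\<in>X. \<forall>v\<in>X. f u = f v \<longrightarrow> ?L u = ?L v \<and>
          (\<forall>w\<in>(V1 \<union> V2)-X. (u,w)\<in>E1 \<union> E2 \<longleftrightarrow> (v,w)\<in>E1 \<union> E2)"
      proof (intro ballI impI conjI)
        fix u v assume u: "u\<in>X" and v: "v\<in>X" and fu: "f u = f v"
        have uv: "u \<in> V1" "v \<in> V1" using X(1) u v by auto
        have n2: "(u,w) \<notin> E2" "(v,w) \<notin> E2" for w using E2s uv disj by auto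
        have "l1 u = l1 v" using f(2) u v fu by blast
        then show "?L u = ?L v" using uv by simp
        fix w assume w: "w \<in> (V1 \<union> V2) - X"
        show "(u,w) \<in> E1\<union>E2 \<longleftrightarrow> (v,w) \<in> E1\<union>E2"
        proof (cases "w \<in> V1")
          case True
          then have "w \<in> V1 - X" using w by blast
          then have "(u,w)\<in>E1 \<longleftrightarrow> (v,w)\<in>E1" using f(2) u v fu by blast
          then show ?thesis using n2 by blast
        next
          case False
          have "(u,w) \<notin> E1" "(v,w) \<notin> E1" using E1s False by auto
          then show ?thesis using n2 by blast
        qed
      qed
      then have "goodX c (V1 \<union> V2) (E1 \<union> E2) ?L X" unfolding goodX_def using f(1) by blast
      then show ?thesis using X by (intro exI[of _ X]) auto
    next
      assume h: "m \<le> card V2"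
      then obtain X where X: "X \<subseteq> V2" "m \<le> card X" "card X < 2*m" "goodX c V2 E2 l2 X"
        using union.IH(2) m(1) unfolding cwInv_def by blast
      then obtain f where f: "\<forall>x\<in>X. f x < c"
        "\<forall>u\<in>X. \<forall>v\<in>X. f u = f v \<longrightarrow> l2 u = l2 v \<and> (\<forall>w\<in>V2-X. (u,w)\<in>E2 \<longleftrightarrow> (v,w)\<in>E2)"
        unfolding goodX_def by blast
      have "\<forall>u\<in>X. \<forall>v\<in>X. f u = f v \<longrightarrow> ?L u = ?L v \<and>
          (\<forall>w\<in>(V1 \<union> V2)-X. (u,w)\<in>E1 \<union> E2 \<longleftrightarrow> (v,w)\<in>E1 \<union> E2)"
      proof (intro ballI impI conjI)
        fix u v assume u: "u\<in>X" and v: "v\<in>X" and fu: "f u = f v"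
        have uv: "u \<in> V2" "v \<in> V2" using X(1) u v by auto
        have uv1: "u \<notin> V1" "v \<notin> V1" using uv disj by auto
        have n1: "(u,w) \<notin> E1" "(v,w) \<notin> E1" for w using E1s uv1 by auto
        have "l2 u = l2 v" using f(2) u v fu by blast
        then show "?L u = ?L v" using uv1 by simp
        fix w assume w: "w \<in> (V1 \<union> V2) - X"
        show "(u,w) \<in> E1\<union>E2 \<longleftrightarrow> (v,w) \<in> E1\<union>E2"
        proof (cases "w \<in> V2")
          case True
          then have "w \<in> V2 - X" using w by blast
          then have "(u,w)\<in>E2 \<longleftrightarrow> (v,w)\<in>E2" using f(2) u v fu by blast
          then show ?thesis using n1 by blast
        next
          case False
          have "(u,w) \<notin> E2" "(v,w) \<notin> E2" using E2s False by auto
          then show ?thesis using n1 by blast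
        qed
      qed
      then have "goodX c (V1 \<union> V2) (E1 \<union> E2) ?L X" unfolding goodX_def using f(1) by blast
      then show ?thesis using X by (intro exI[of _ X]) auto
    qed
  qed
  have "finite (V1 \<union> V2)" "V1 \<union> V2 \<noteq> {}" "E1 \<union> E2 \<subseteq> (V1 \<union> V2) \<times> (V1 \<union> V2)"
    using union.IH E1s E2s unfolding cwInv_def by auto
  then show ?case unfolding cwInv_def using lab P2 by blast
next
  case (recolor V E l a b)
  let ?l = "\<lambda>v. if l v = a then b else l v"
  have gx: "goodX c V E ?l X" if gX: "goodX c V E l X" for X
  proof -
    obtain f where f: "\<forall>x\<in>X. f x < c"
        "\<forall>u\<in>X. \<forall>v\<in>X. f u = f v \<longrightarrow> l u = l v \<and> (\<forall>w\<in>V-X. (u,w)\<in>E \<longleftrightarrow> (v,w)\<in>E)"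
      using gX unfolding goodX_def by blast
    have "\<forall>u\<in>X. \<forall>v\<in>X. f u = f v \<longrightarrow> ?l u = ?l v \<and> (\<forall>w\<in>V-X. (u,w)\<in>E \<longleftrightarrow> (v,w)\<in>E)"
      using f(2) by metis
    then show ?thesis unfolding goodX_def using f(1) by blast
  qed
  have lab: "\<forall>v\<in>V. ?l v < c" using recolor.IH recolor.hyps unfolding cwInv_def by auto
  show ?case using recolor.IH lab gx unfolding cwInv_def by blast
next
  case (join V E l a b)
  let ?F = "{(u, w). u \<in> V \<and> w \<in> V \<and> (l u = a \<and> l w = b \<or> l u = b \<and> l w = a)}"
  have gx: "goodX c V (E \<union> ?F) l X" if gX: "goodX c V E l X" "X \<subseteq> V" for X
  proof -
    obtain f where f: "\<forall>x\<in>X. f x < c"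
        "\<forall>u\<in>X. \<forall>v\<in>X. f u = f v \<longrightarrow> l u = l v \<and> (\<forall>w\<in>V-X. (u,w)\<in>E \<longleftrightarrow> (v,w)\<in>E)"
      using gX unfolding goodX_def by blast
    have "\<forall>u\<in>X. \<forall>v\<in>X. f u = f v \<longrightarrow> l u = l v \<and>
          (\<forall>w\<in>V-X. (u,w)\<in>E \<union> ?F \<longleftrightarrow> (v,w)\<in>E \<union> ?F)"
    proof (intro ballI impI conjI)
      fix u v assume u: "u\<in>X" and v: "v\<in>X" and fu: "f u = f v"
      show luv: "l u = l v" using f(2) u v fu by blast
      fix w assume w: "w \<in> V - X"
      have e: "(u,w)\<in>E \<longleftrightarrow> (v,w)\<in>E" using f(2) u v fu w by blast
      have "(u,w) \<in> ?F \<longleftrightarrow> (v,w) \<in> ?F" using luv u v gX(2) by auto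
      then show "(u,w)\<in>E \<union> ?F \<longleftrightarrow> (v,w)\<in>E \<union> ?F" using e by blast
    qed
    then show ?thesis unfolding goodX_def using f(1) by blast
  qed
  have "E \<union> ?F \<subseteq> V \<times> V" using join.IH unfolding cwInv_def by auto
  then show ?case using join.IH gx unfolding cwInv_def by blast
qed

lemma cw_edgeless:
  shows "1 \<le> n \<Longrightarrow> n \<le> N \<Longrightarrow> cw_constructible N {0..<n} {} (\<lambda>v. v)"
proof (induction n)
  case 0
  then show ?case by simp
next
  case (Suc n)
  show ?case
  proof (cases "n = 0")
    case True
    have "cw_constructible N {0} {} (\<lambda>v. v)" by (rule cw_constructible.single) (use Suc True in simp)
    moreover have "{0..<Suc n} = {0::nat}" using True by auto
    ultimately show ?thesis by (simp only:)
  next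
    case False
    have IH: "cw_constructible N {0..<n} {} (\<lambda>v. v)" using Suc False by simp
    have s: "cw_constructible N {n} {} (\<lambda>v. v)" by (rule cw_constructible.single) (use Suc in simp)
    have "cw_constructible N ({0..<n} \<union> {n}) ({} \<union> {}) (\<lambda>v. if v \<in> {0..<n} then v else v)"
      by (rule cw_constructible.union[OF IH s]) auto
    moreover have "{0..<n} \<union> {n} = {0..<Suc n}" by auto
    moreover have "(\<lambda>v. if v \<in> {0..<n} then v else v) = (\<lambda>v::nat. v)" by auto
    ultimately show ?thesis by (simp only: Un_empty_left)
  qed
qed

lemma cw_add_edge:
  assumes "cw_constructible N V E l" "inj_on l V" "u \<in> V" "w \<in> V" "u \<noteq> w"
  shows "cw_constructible N V (E \<union> {(u,w),(w,u)}) l"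
proof -
  have inv: "cwInv N V E l" using cw_inv[OF assms(1)] .
  have lu: "l u < N" "l w < N" using inv assms(3,4) unfolding cwInv_def by auto
  have ne: "l u \<noteq> l w" using assms(2-5) by (meson inj_on_def)
  have j: "cw_constructible N V (E \<union> {(x, y). x \<in> V \<and> y \<in> V \<and> (l x = l u \<and> l y = l w \<or> l x = l w \<and> l y = l u)}) l"
    by (rule cw_constructible.join[OF assms(1) lu ne])
  have "{(x, y). x \<in> V \<and> y \<in> V \<and> (l x = l u \<and> l y = l w \<or> l x = l w \<and> l y = l u)} = {(u,w),(w,u)}"
  proof (intro set_eqI iffI)
    fix z assume "z \<in> {(x, y). x \<in> V \<and> y \<in> V \<and> (l x = l u \<and> l y = l w \<or> l x = l w \<and> l y = l u)}"
    then obtain x y where z: "z = (x,y)" "x \<in> V" "y \<in> V" "l x = l u \<and> l y = l w \<or> l x = l w \<and> l y = l u" by blast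
    then have "x = u \<and> y = w \<or> x = w \<and> y = u" using assms(2-4) by (metis inj_on_def)
    then show "z \<in> {(u,w),(w,u)}" using z by auto
  next
    fix z assume "z \<in> {(u,w),(w,u)}"
    then show "z \<in> {(x, y). x \<in> V \<and> y \<in> V \<and> (l x = l u \<and> l y = l w \<or> l x = l w \<and> l y = l u)}"
      using assms(3,4) by auto
  qed
  then show ?thesis using j by simp
qed

lemma cw_add_edges:
  assumes "finite F" "cw_constructible N V E l" "inj_on l V"
    "F \<subseteq> {(u,w). u \<in> V \<and> w \<in> V \<and> u \<noteq> w}"
  shows "cw_constructible N V (E \<union> F \<union> F\<inverse>) l"
  using assms(1,4)
proof (induction F rule: finite_induct)
  case empty
  then show ?case using assms(2) by simp
next
  case (insert z F)
  obtain u w where z: "z = (u,w)" by fastforce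
  have uw: "u \<in> V" "w \<in> V" "u \<noteq> w" using insert.prems z by auto
  have "cw_constructible N V ((E \<union> F \<union> F\<inverse>) \<union> {(u,w),(w,u)}) l"
    using cw_add_edge[OF insert.IH[OF _] assms(3) uw] insert.prems by blast
  moreover have "(E \<union> F \<union> F\<inverse>) \<union> {(u,w),(w,u)} = E \<union> insert z F \<union> (insert z F)\<inverse>"
    using z by auto
  ultimately show ?case by simp
qed

lemma G_E_sub: "G_E k \<subseteq> {0..<3^k} \<times> {0..<3^k}"
  unfolding G_E_def by auto

lemma G_E_sym: "(x,y) \<in> G_E k \<Longrightarrow> (y,x) \<in> G_E k"
  unfolding G_E_def by blast

lemma below_lower: "x \<in> below i b \<Longrightarrow> b * 3^i \<le> x \<and> x < Suc b * 3^i"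
  unfolding below_def by auto

lemma G_E_irrefl: "(x,x) \<notin> G_E k"
proof
  assume "(x,x) \<in> G_E k"
  then obtain i b where "x div 2 \<in> below i b \<and> x div 2 \<in> below i (Suc b)"
    unfolding G_E_def by auto
  then show False using below_lower[of "x div 2" i b] below_lower[of "x div 2" i "Suc b"] by auto
qed

lemma cw_exists: "cw_constructible (3^k) (G_V k) (G_E k) (\<lambda>v. v)"
proof -
  have e: "cw_constructible (3^k) {0..<3^k} {} (\<lambda>v. v)" by (rule cw_edgeless) auto
  have f: "finite (G_E k)" using G_E_sub by (rule finite_subset) auto
  have sub: "G_E k \<subseteq> {(u,w). u \<in> {0..<3^k} \<and> w \<in> {0..<3^k} \<and> u \<noteq> w}"
    using G_E_sub G_E_irrefl by fastforce
  have "cw_constructible (3^k) {0..<3^k} ({} \<union> G_E k \<union> (G_E k)\<inverse>) (\<lambda>v. v)"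
    by (rule cw_add_edges[OF f e _ sub]) simp
  moreover have "{} \<union> G_E k \<union> (G_E k)\<inverse> = G_E k" using G_E_sym by auto
  ultimately show ?thesis unfolding G_V_def by simp
qed

lemma cw_least:
  "\<exists>lab. cw_constructible (clique_width (G_V k) (G_E k)) (G_V k) (G_E k) lab"
  unfolding clique_width_def
  by (rule LeastI_ex) (use cw_exists in blast)

definition dig01 :: "nat \<Rightarrow> nat \<Rightarrow> bool" where
  "dig01 i s \<longleftrightarrow> (\<forall>t<i. (s div 3 ^ t) mod 3 \<le> 1)"

lemma below_intro: "s < 3^i \<Longrightarrow> dig01 i s \<Longrightarrow> b * 3^i + s \<in> below i b"
  unfolding below_def dig01_def by blast

lemma below_elim: "x \<in> below i b \<Longrightarrow> \<exists>s. x = b * 3^i + s \<and> s < 3^i \<and> dig01 i s"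
  unfolding below_def dig01_def by blast

lemma digit_shift:
  fixes s b :: nat
  assumes "s < 3^i" "d < i"
  shows "((b * 3^i + s) div 3^d) mod 3 = (s div 3^d) mod 3"
proof -
  have e: "(3::nat)^i = 3^d * 3^(i-d)" using assms(2) by (simp add: power_add[symmetric])
  have eq: "b * 3^i + s = s + (b * 3^(i-d)) * 3^d" unfolding e by (simp add: algebra_simps)
  have dd: "(s + (b * 3^(i-d)) * 3^d) div 3^d = b * 3^(i-d) + s div 3^d" by (rule div_mult_self1) simp
  have "(b * 3^i + s) div 3^d = b * 3^(i-d) + s div 3^d"
    by (simp only: eq dd)
  moreover have "(3::nat)^(i-d) = 3 * 3^(i-d-1)" using assms(2)
    by (metis Suc_diff_Suc diff_Suc_1 power_Suc zero_less_diff)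
  ultimately have "(b * 3^i + s) div 3^d = 3 * (b * 3^(i-d-1)) + s div 3^d" by simp
  then show ?thesis by simp
qed

lemma yellow_adj: "odd y \<Longrightarrow> (y,z) \<in> G_E k \<Longrightarrow> z = y + 1 \<or> y = z + 1"
  unfolding G_E_def by auto

lemma path_adj: "x + 1 < 3^k \<Longrightarrow> (x, x+1) \<in> G_E k"
  unfolding G_E_def by auto

lemma below_adj_bounds:
  assumes "p \<in> below i b" "q \<in> below i (Suc b)"
  shows "p < q \<and> q < p + 2 * 3^i"
  using below_lower[OF assms(1)] below_lower[OF assms(2)] by (auto simp: algebra_simps)

lemma below_digit_le:
  assumes "p \<in> below i b" "(p div 3^d) mod 3 = 2"
  shows "i \<le> d"
proof (rule ccontr)
  assume "\<not> i \<le> d"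
  then have di: "d < i" by simp
  obtain s where s: "p = b * 3^i + s" "s < 3^i" "dig01 i s" using below_elim[OF assms(1)] by blast
  have "(p div 3^d) mod 3 = (s div 3^d) mod 3" using digit_shift[OF s(2) di] s(1) by simp
  moreover have "(s div 3^d) mod 3 \<le> 1" using s(3) di unfolding dig01_def by blast
  ultimately show False using assms(2) by simp
qed

lemma nonadj:
  assumes "(p div 3^d) mod 3 = 2" "p + 2 * 3^d \<le> q \<or> q + 2 * 3^d \<le> p"
  shows "(2*p, 2*q) \<notin> G_E k"
proof
  assume "(2*p, 2*q) \<in> G_E k"
  then have "2*p + 1 = 2*q \<or> 2*q + 1 = 2*p \<or>
        (\<exists>i<k. \<exists>b. (p \<in> below i b \<and> q \<in> below i (Suc b)) \<or> (q \<in> below i b \<and> p \<in> below i (Suc b)))"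
    unfolding G_E_def by auto
  moreover have "2*p + 1 \<noteq> 2*q" "2*q + 1 \<noteq> 2*p" by presburger+
  ultimately obtain i b where ib: "(p \<in> below i b \<and> q \<in> below i (Suc b)) \<or> (q \<in> below i b \<and> p \<in> below i (Suc b))"
    by blast
  then show False
  proof
    assume h: "p \<in> below i b \<and> q \<in> below i (Suc b)"
    have "i \<le> d" using below_digit_le h assms(1) by blast
    then have "(3::nat)^i \<le> 3^d" by (simp add: power_increasing)
    moreover have "p < q \<and> q < p + 2 * 3^i" using below_adj_bounds[of p i b q] h by blast
    ultimately show False using assms(2) by linarith
  next
    assume h: "q \<in> below i b \<and> p \<in> below i (Suc b)"
    have "i \<le> d" using below_digit_le h assms(1) by blast
    then have "(3::nat)^i \<le> 3^d" by (simp add: power_increasing)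
    moreover have "q < p \<and> p < q + 2 * 3^i" using below_adj_bounds[of q i b p] h by blast
    ultimately show False using assms(2) by linarith
  qed
qed

lemma adj_intro:
  assumes "j < k" "s < 3^j" "dig01 j s" "s' < 3^j" "dig01 j s'"
    "2 * (b * 3^j + s) < 3^k" "2 * (Suc b * 3^j + s') < 3^k"
  shows "(2 * (b * 3^j + s), 2 * (Suc b * 3^j + s')) \<in> G_E k"
proof -
  have "b * 3^j + s \<in> below j b" by (rule below_intro[OF assms(2,3)])
  moreover have "Suc b * 3^j + s' \<in> below j (Suc b)" by (rule below_intro[OF assms(4,5)])
  ultimately show ?thesis unfolding G_E_def using assms(1,6,7) by auto
qed

fun hh :: "nat \<Rightarrow> nat" where
  "hh 0 = 0"
| "hh (Suc j) = 3 * hh j + 1"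

lemma hh_eq: "2 * hh j + 1 = 3^j"
  by (induction j) auto

lemma dig01_0: "dig01 j 0"
  unfolding dig01_def by simp

lemma dig01_step:
  assumes "dig01 j x" "d \<le> 1"
  shows "dig01 (Suc j) (3 * x + d)"
  unfolding dig01_def
proof (intro allI impI)
  fix t assume t: "t < Suc j"
  show "((3 * x + d) div 3 ^ t) mod 3 \<le> 1"
  proof (cases t)
    case 0
    then show ?thesis using assms(2) by simp
  next
    case (Suc t')
    have "(3 * x + d) div 3 ^ t = ((3 * x + d) div 3) div 3^t'"
      using Suc by (simp add: div_mult2_eq)
    also have "(3 * x + d) div 3 = x" using assms(2) by simp
    finally show ?thesis using assms(1) t Suc unfolding dig01_def by simp
  qed
qed

lemma dig01_hh: "dig01 j (hh j)"
proof (induction j)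
  case 0
  then show ?case by (simp add: dig01_0)
next
  case (Suc j)
  then show ?case using dig01_step[of j "hh j" 1] by simp
qed

lemma hh_lt: "hh j < 3^j"
  using hh_eq[of j] by linarith

lemma digit2:
  fixes s B :: nat
  assumes "s < 3^j"
  shows "((B * 3^(Suc j) + 2 * 3^j + s) div 3^j) mod 3 = 2"
proof -
  have "B * 3^(Suc j) + 2 * 3^j + s = s + (3*B + 2) * 3^j" by (simp add: algebra_simps)
  moreover have "(s + (3*B + 2) * 3^j) div 3^j = (3*B+2) + s div 3^j" by (rule div_mult_self1) simp
  moreover have "s div 3^j = 0" using assms by simp
  ultimately have "(B * 3^(Suc j) + 2 * 3^j + s) div 3^j = 3*B + 2" by (simp only: add_0_right)
  moreover have "(3*B+2) mod 3 = (2::nat)" by presburger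
  ultimately show ?thesis by (simp only:)
qed

lemma distinct_contra:
  assumes gx: "goodX c V E l X" and cJ: "c < card J" and fJ: "finite J"
    and uw: "\<forall>j\<in>J. u j \<in> X \<and> w j \<in> V \<and> w j \<notin> X \<and> (u j, w j) \<in> E"
    and cross: "\<forall>i\<in>J. \<forall>j\<in>J. i \<noteq> j \<longrightarrow> (u i, w j) \<notin> E \<or> (u j, w i) \<notin> E"
  shows False
proof -
  obtain f where f: "\<forall>x\<in>X. f x < c"
    "\<forall>a\<in>X. \<forall>b\<in>X. f a = f b \<longrightarrow> l a = l b \<and> (\<forall>z\<in>V-X. (a,z)\<in>E \<longleftrightarrow> (b,z)\<in>E)"
    using gx unfolding goodX_def by blast
  have "\<not> inj_on (\<lambda>j. f (u j)) J"
  proof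
    assume inj: "inj_on (\<lambda>j. f (u j)) J"
    have "(\<lambda>j. f (u j)) ` J \<subseteq> {..<c}" using f(1) uw by auto
    then have "card ((\<lambda>j. f (u j)) ` J) \<le> c" by (metis card_lessThan card_mono finite_lessThan)
    then show False using card_image[OF inj] cJ by simp
  qed
  then obtain i j where ij: "i \<in> J" "j \<in> J" "i \<noteq> j" "f (u i) = f (u j)"
    unfolding inj_on_def by blast
  have ui: "u i \<in> X" "u j \<in> X" using uw ij by auto
  have eqv: "\<forall>z\<in>V-X. (u i,z)\<in>E \<longleftrightarrow> (u j,z)\<in>E" using f(2) ui ij(4) by blast
  have wj: "w j \<in> V - X" "w i \<in> V - X" using uw ij by auto
  have "(u i, w j) \<in> E" using eqv wj(1) uw ij(2) by blast
  moreover have "(u j, w i) \<in> E" using eqv wj(2) uw ij(1) by blast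
  ultimately show False using cross ij by blast
qed

lemma yellow_far:
  assumes "odd a" "a = x \<or> a = x + 1" "b = x' \<or> b = x' + 1" "x + 3 \<le> x' \<or> x' + 3 \<le> x"
  shows "(a, b) \<notin> G_E k \<and> (b, a) \<notin> G_E k"
proof -
  have "(a,b) \<notin> G_E k"
  proof
    assume "(a,b) \<in> G_E k"
    then have "b = a + 1 \<or> a = b + 1" using yellow_adj assms(1) by blast
    then show False using assms(2-4) by auto
  qed
  then show ?thesis using G_E_sym by blast
qed

lemma many_boundaries:
  assumes gx: "goodX c (G_V k) (G_E k) l X" and XV: "X \<subseteq> G_V k"
    and cN: "c < N"
    and many: "3 * N \<le> card {x. x + 1 < 3^k \<and> (x \<in> X) \<noteq> (x + 1 \<in> X)}"
  shows False
proof -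
  define Bd where "Bd = {x. x + 1 < 3^k \<and> (x \<in> X) \<noteq> (x + 1 \<in> X)}"
  define R where "R = (\<lambda>\<rho>::nat. {x\<in>Bd. x mod 3 = \<rho>})"
  have fB: "finite Bd" unfolding Bd_def by (rule finite_subset[of _ "{..<3^k}"]) auto
  have "Bd \<subseteq> R 0 \<union> R 1 \<union> R 2" unfolding R_def by auto
  then have "card Bd \<le> card (R 0 \<union> R 1 \<union> R 2)" by (rule card_mono[rotated]) (simp add: R_def fB)
  also have "\<dots> \<le> card (R 0) + card (R 1) + card (R 2)"
    by (metis (no_types, lifting) add_le_mono card_Un_le le_trans order_refl)
  finally have s3: "card Bd \<le> card (R 0) + card (R 1) + card (R 2)" .
  have "3 * N \<le> card Bd" using many unfolding Bd_def .
  then have "N \<le> card (R 0) \<or> N \<le> card (R 1) \<or> N \<le> card (R 2)" using s3 by linarith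
  then have "\<exists>\<rho>. N \<le> card (R \<rho>)" by blast
  then obtain \<rho> where \<rho>: "N \<le> card (R \<rho>)" by blast
  have fR: "finite (R \<rho>)" unfolding R_def using fB by simp
  obtain J where J: "J \<subseteq> R \<rho>" "card J = N" using obtain_subset_with_card_n[OF \<rho>] by blast
  have fJ: "finite J" using J(1) fR finite_subset by blast
  define u where "u = (\<lambda>x. if x \<in> X then x else x + 1)"
  define w where "w = (\<lambda>x. if x \<in> X then x + 1 else x)"
  have uw: "\<forall>j\<in>J. u j \<in> X \<and> w j \<in> G_V k \<and> w j \<notin> X \<and> (u j, w j) \<in> G_E k"
  proof
    fix j assume "j \<in> J"
    then have j: "j + 1 < 3^k" "(j \<in> X) \<noteq> (j + 1 \<in> X)" using J(1) unfolding R_def Bd_def by auto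
    have e: "(j, j+1) \<in> G_E k" using path_adj[OF j(1)] .
    show "u j \<in> X \<and> w j \<in> G_V k \<and> w j \<notin> X \<and> (u j, w j) \<in> G_E k"
      using j e G_E_sym[OF e] unfolding u_def w_def G_V_def by auto
  qed
  have cross: "\<forall>i\<in>J. \<forall>j\<in>J. i \<noteq> j \<longrightarrow> (u i, w j) \<notin> G_E k \<or> (u j, w i) \<notin> G_E k"
  proof (intro ballI impI)
    fix i j assume ij: "i \<in> J" "j \<in> J" "i \<noteq> j"
    have "i mod 3 = j mod 3" using ij J(1) unfolding R_def by auto
    then have far: "i + 3 \<le> j \<or> j + 3 \<le> i" using ij(3) by presburger
    have ui: "u i = i \<or> u i = i + 1" "w i = i \<or> w i = i + 1" "u j = j \<or> u j = j + 1" "w j = j \<or> w j = j + 1"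
      unfolding u_def w_def by auto
    have "odd (u i) \<or> odd (w i)" unfolding u_def w_def by auto
    then show "(u i, w j) \<notin> G_E k \<or> (u j, w i) \<notin> G_E k"
    proof
      assume "odd (u i)"
      then show ?thesis using yellow_far[of "u i" i "w j" j k] ui far by blast
    next
      assume "odd (w i)"
      then show ?thesis using yellow_far[of "w i" i "u j" j k] ui far by blast
    qed
  qed
  show False
    by (rule distinct_contra[OF gx _ fJ uw cross]) (use J(2) cN in simp)
qed

lemma band_exists:
  fixes Bd :: "nat set"
  assumes fB: "finite Bd" and cB: "card Bd < C" and E1: "1 \<le> Ee"
  shows "\<exists>t\<le>C*C. \<forall>x\<in>Bd. \<forall>y\<in>Bd. x < y \<longrightarrow> y - x < 3^(Ee*t) \<or> 3^(Ee*(Suc t)) \<le> y - x"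
proof (rule ccontr)
  assume "\<not> ?thesis"
  then have h: "\<forall>t\<le>C*C. \<exists>d. d \<in> (\<lambda>(x,y). y - x) ` (Bd \<times> Bd) \<and> 3^(Ee*t) \<le> d \<and> d < 3^(Ee*(Suc t))"
    by (fastforce simp: not_less)
  define D where "D = (\<lambda>(x,y). y - x) ` (Bd \<times> Bd)"
  define dd where "dd = (\<lambda>t. SOME d. d \<in> D \<and> 3^(Ee*t) \<le> d \<and> d < 3^(Ee*(Suc t)))"
  have dd: "dd t \<in> D \<and> 3^(Ee*t) \<le> dd t \<and> dd t < 3^(Ee*(Suc t))" if "t \<le> C*C" for t
    unfolding dd_def D_def by (rule someI_ex) (use h that in blast)
  have mono: "(3::nat)^(Ee*(Suc t)) \<le> 3^(Ee*t')" if "t < t'" for t t'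
  proof -
    have "Ee * Suc t \<le> Ee * t'" using that by (intro mult_le_mono2) simp
    then show ?thesis by (intro power_increasing) auto
  qed
  have inj: "inj_on dd {..C*C}"
  proof (rule inj_onI)
    fix t t' assume tt: "t \<in> {..C*C}" "t' \<in> {..C*C}" "dd t = dd t'"
    show "t = t'"
    proof (rule ccontr)
      assume "t \<noteq> t'"
      then have "t < t' \<or> t' < t" by linarith
      then show False
      proof
        assume "t < t'"
        then have m: "(3::nat)^(Ee*Suc t) \<le> 3^(Ee*t')" by (rule mono)
        have a: "dd t < 3^(Ee*Suc t)" using dd[of t] tt(1) by simp
        have b: "3^(Ee*t') \<le> dd t'" using dd[of t'] tt(2) by simp
        show False using m a b tt(3) by linarith
      next
        assume "t' < t"
        then have m: "(3::nat)^(Ee*Suc t') \<le> 3^(Ee*t)" by (rule mono)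
        have a: "dd t' < 3^(Ee*Suc t')" using dd[of t'] tt(2) by simp
        have b: "3^(Ee*t) \<le> dd t" using dd[of t] tt(1) by simp
        show False using m a b tt(3) by linarith
      qed
    qed
  qed
  have "dd ` {..C*C} \<subseteq> D" using dd by auto
  moreover have "finite D" unfolding D_def using fB by simp
  ultimately have "card (dd ` {..C*C}) \<le> card D" by (simp add: card_mono)
  also have "card D \<le> card (Bd \<times> Bd)" unfolding D_def using fB by (intro card_image_le) simp
  also have "\<dots> = card Bd * card Bd" by (simp add: card_cartesian_product)
  also have "\<dots> \<le> C * C" using cB by (simp add: mult_le_mono)
  finally have "card (dd ` {..C*C}) \<le> C * C" .
  then show False using card_image[OF inj] by simp
qed

definition bdry :: "(nat \<Rightarrow> bool) \<Rightarrow> nat \<Rightarrow> nat \<Rightarrow> bool" where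
  "bdry \<sigma> n b \<longleftrightarrow> b + 1 < n \<and> \<sigma> b \<noteq> \<sigma> (Suc b)"

definition calm :: "(nat \<Rightarrow> bool) \<Rightarrow> nat \<Rightarrow> nat \<Rightarrow> nat \<Rightarrow> bool" where
  "calm \<sigma> n G y \<longleftrightarrow> (\<forall>b. bdry \<sigma> n b \<longrightarrow> y + G < b \<or> b + G < y)"

lemma const_interval:
  assumes "\<forall>z. a \<le> z \<and> z < c \<longrightarrow> \<sigma> z = \<sigma> (Suc z)" "a \<le> y" "y \<le> c"
  shows "\<sigma> y = \<sigma> a"
  using assms(2,3)
proof (induction y)
  case 0
  then show ?case by simp
next
  case (Suc y)
  show ?case
  proof (cases "a = Suc y")
    case True
    then show ?thesis by simp
  next
    case False
    then have "a \<le> y" using Suc.prems by simp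
    then show ?thesis using Suc assms(1) by force
  qed
qed

lemma ivt:
  assumes "a < c" "c < n" "\<sigma> a \<noteq> \<sigma> c"
  shows "\<exists>z. a \<le> z \<and> z < c \<and> bdry \<sigma> n z"
proof (rule ccontr)
  assume "\<not> ?thesis"
  then have "\<forall>z. a \<le> z \<and> z < c \<longrightarrow> \<sigma> z = \<sigma> (Suc z)" using assms(2) unfolding bdry_def by auto
  then have "\<sigma> c = \<sigma> a" using const_interval[of a c \<sigma> c] assms(1) by simp
  then show False using assms(3) by simp
qed

lemma find_flip:
  assumes band: "\<forall>x y. bdry \<sigma> n x \<and> bdry \<sigma> n y \<and> x < y \<longrightarrow> y - x < G \<or> Z \<le> y - x"
    and ZG: "3*G + 2 \<le> Z" and G1: "1 \<le> G"
    and p: "calm \<sigma> n G p" "Z \<le> p" "p + Z \<le> n"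
    and q: "calm \<sigma> n G q" "Z \<le> q" "q + Z \<le> n"
    and pq: "\<sigma> p \<noteq> \<sigma> q"
  shows "\<exists>b1 b2. b1 \<le> b2 \<and> b2 < b1 + G \<and> Z \<le> b1 \<and> b2 + Z \<le> n \<and> \<sigma> b1 \<noteq> \<sigma> (Suc b2) \<and>
    (\<forall>y. b1 < y + Z \<and> y \<le> b1 \<longrightarrow> \<sigma> y = \<sigma> b1) \<and> (\<forall>y. b2 < y \<and> y \<le> b2 + Z \<longrightarrow> \<sigma> y = \<sigma> (Suc b2))"
proof -
  define a where "a = min p q"
  define c where "c = max p q"
  have "p \<noteq> q" using pq by auto
  then have ac: "a < c" "calm \<sigma> n G a" "calm \<sigma> n G c" "Z \<le> a" "c + Z \<le> n" "\<sigma> a \<noteq> \<sigma> c"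
    using p q pq unfolding a_def c_def by (auto simp: min_def max_def)
  define S1 where "S1 = {y. a \<le> y \<and> y \<le> c \<and> calm \<sigma> n G y \<and> \<sigma> y = \<sigma> a}"
  have fS1: "finite S1" unfolding S1_def by (rule finite_subset[of _ "{..c}"]) auto
  have aS1: "a \<in> S1" unfolding S1_def using ac by auto
  define p' where "p' = Max S1"
  have p'S1: "p' \<in> S1" unfolding p'_def using fS1 aS1 Max_in by blast
  have p'max: "y \<le> p'" if "y \<in> S1" for y unfolding p'_def using fS1 that by simp
  have p'c0: "p' \<le> c" "\<sigma> p' = \<sigma> a" using p'S1 unfolding S1_def by auto
  have p'c: "p' < c"
  proof (rule ccontr)
    assume "\<not> p' < c"
    then have "p' = c" using p'c0 by simp
    then show False using p'c0 ac(6) by simp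
  qed
  define S2 where "S2 = {y. p' < y \<and> y \<le> c \<and> calm \<sigma> n G y}"
  have cS2: "c \<in> S2" unfolding S2_def using p'c ac by auto
  have fS2: "finite S2" unfolding S2_def by (rule finite_subset[of _ "{..c}"]) auto
  define q' where "q' = Min S2"
  have q'S2: "q' \<in> S2" unfolding q'_def using fS2 cS2 Min_in by blast
  have q'min: "q' \<le> y" if "y \<in> S2" for y unfolding q'_def using fS2 that by simp
  have p'props: "a \<le> p'" "p' \<le> c" "calm \<sigma> n G p'" "\<sigma> p' = \<sigma> a" using p'S1 unfolding S1_def by auto
  have q'props: "p' < q'" "q' \<le> c" "calm \<sigma> n G q'" using q'S2 unfolding S2_def by auto
  have sq': "\<sigma> q' \<noteq> \<sigma> a"
  proof
    assume "\<sigma> q' = \<sigma> a"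
    then have "q' \<in> S1" unfolding S1_def using q'props p'props by auto
    then show False using p'max q'props by fastforce
  qed
  have gap: "\<not> calm \<sigma> n G y" if "p' < y" "y < q'" for y
  proof
    assume "calm \<sigma> n G y"
    then have "y \<in> S2" unfolding S2_def using that q'props by auto
    then show False using q'min that by fastforce
  qed
  have q'n: "q' < n" using q'props ac ZG by linarith
  obtain z0 where z0: "p' \<le> z0" "z0 < q'" "bdry \<sigma> n z0"
    using ivt[OF q'props(1) q'n] sq' p'props by auto
  define B where "B = {z. p' \<le> z \<and> z < q' \<and> bdry \<sigma> n z}"
  have fB: "finite B" unfolding B_def by (rule finite_subset[of _ "{..q'}"]) auto
  have z0B: "z0 \<in> B" unfolding B_def using z0 by auto
  define b1 where "b1 = Min B"
  define b2 where "b2 = Max B"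
  have b1B: "b1 \<in> B" unfolding b1_def using fB z0B Min_in by blast
  have b2B: "b2 \<in> B" unfolding b2_def using fB z0B Max_in by blast
  have b1min: "b1 \<le> z" if "z \<in> B" for z unfolding b1_def using fB that by simp
  have b2max: "z \<le> b2" if "z \<in> B" for z unfolding b2_def using fB that by simp
  have b1p: "p' \<le> b1" "b1 < q'" "bdry \<sigma> n b1" using b1B unfolding B_def by auto
  have b2p: "p' \<le> b2" "b2 < q'" "bdry \<sigma> n b2" using b2B unfolding B_def by auto
  have b12: "b1 \<le> b2" using b1min b2B by blast
  have b1far: "p' + G < b1" using p'props(3) b1p unfolding calm_def by force
  have b2far: "b2 + G < q'" using q'props(3) b2p unfolding calm_def by force
  have small: "b2 < b1 + G"
  proof (rule ccontr)
    assume "\<not> b2 < b1 + G"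
    then have "b1 < b2" "\<not> b2 - b1 < G" using G1 by auto
    then have bz: "Z \<le> b2 - b1" using band b1p(3) b2p(3) by blast
    define y where "y = b1 + 2*G + 1"
    have "calm \<sigma> n G y" unfolding calm_def
    proof (intro allI impI)
      fix z assume zb: "bdry \<sigma> n z"
      show "y + G < z \<or> z + G < y"
      proof (cases "z \<le> b1")
        case True
        then show ?thesis unfolding y_def by simp
      next
        case False
        then have "z - b1 < G \<or> Z \<le> z - b1" using band b1p(3) zb by auto
        then show ?thesis unfolding y_def using False ZG by auto
      qed
    qed
    moreover have "p' < y" "y < q'" unfolding y_def using b1far bz b2p ZG by auto
    ultimately show False using gap by blast
  qed
  have left: "\<sigma> y = \<sigma> b1" if y: "b1 < y + Z" "y \<le> b1" for y
  proof -
    have "\<forall>z. y \<le> z \<and> z < b1 \<longrightarrow> \<sigma> z = \<sigma> (Suc z)"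
    proof (intro allI impI)
      fix z assume z: "y \<le> z \<and> z < b1"
      show "\<sigma> z = \<sigma> (Suc z)"
      proof (rule ccontr)
        assume ne: "\<sigma> z \<noteq> \<sigma> (Suc z)"
        have zb: "bdry \<sigma> n z" unfolding bdry_def using ne z b1p q'n by auto
        show False
        proof (cases "p' \<le> z")
          case True
          then have "z \<in> B" unfolding B_def using z b1p zb by auto
          then show False using b1min z by fastforce
        next
          case False
          have "b1 - z < G \<or> Z \<le> b1 - z" using band zb b1p(3) z by blast
          then have "b1 - z < G" using y z by auto
          then show False using p'props(3) zb False b1p unfolding calm_def by force
        qed
      qed
    qed
    then show ?thesis using const_interval[of y b1 \<sigma> b1] y by simp
  qed
  have right: "\<sigma> y = \<sigma> (Suc b2)" if y: "b2 < y" "y \<le> b2 + Z" for y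
  proof -
    have "\<forall>z. Suc b2 \<le> z \<and> z < y \<longrightarrow> \<sigma> z = \<sigma> (Suc z)"
    proof (intro allI impI)
      fix z assume z: "Suc b2 \<le> z \<and> z < y"
      show "\<sigma> z = \<sigma> (Suc z)"
      proof (rule ccontr)
        assume ne: "\<sigma> z \<noteq> \<sigma> (Suc z)"
        have "z + 1 < n" using z y b2p q'props ac by linarith
        then have zb: "bdry \<sigma> n z" unfolding bdry_def using ne by auto
        show False
        proof (cases "z < q'")
          case True
          then have "z \<in> B" unfolding B_def using z b2p zb by auto
          then show False using b2max z by fastforce
        next
          case False
          have "z - b2 < G \<or> Z \<le> z - b2" using band zb b2p(3) z by auto
          then have "z - b2 < G" using y z by auto
          then show False using q'props(3) zb False b2p unfolding calm_def by force
        qed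
      qed
    qed
    then show ?thesis using const_interval[of "Suc b2" y \<sigma> y] y by simp
  qed
  have s1: "\<sigma> b1 = \<sigma> p'"
  proof -
    have "\<forall>z. p' \<le> z \<and> z < b1 \<longrightarrow> \<sigma> z = \<sigma> (Suc z)"
    proof (intro allI impI)
      fix z assume z: "p' \<le> z \<and> z < b1"
      show "\<sigma> z = \<sigma> (Suc z)"
      proof (rule ccontr)
        assume ne: "\<sigma> z \<noteq> \<sigma> (Suc z)"
        have "z \<in> B" unfolding B_def bdry_def using z ne b1p q'n by auto
        then show False using b1min z by fastforce
      qed
    qed
    then show ?thesis using const_interval[of p' b1 \<sigma> b1] b1p by simp
  qed
  have s2: "\<sigma> (Suc b2) = \<sigma> q'"
  proof -
    have "\<forall>z. Suc b2 \<le> z \<and> z < q' \<longrightarrow> \<sigma> z = \<sigma> (Suc z)"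
    proof (intro allI impI)
      fix z assume z: "Suc b2 \<le> z \<and> z < q'"
      show "\<sigma> z = \<sigma> (Suc z)"
      proof (rule ccontr)
        assume ne: "\<sigma> z \<noteq> \<sigma> (Suc z)"
        have "z \<in> B" unfolding B_def bdry_def using z ne b2p q'n by auto
        then show False using b2max z by fastforce
      qed
    qed
    then show ?thesis using const_interval[of "Suc b2" q' \<sigma> q'] b2p by simp
  qed
  have "\<sigma> b1 \<noteq> \<sigma> (Suc b2)" using s1 s2 p'props sq' by simp
  moreover have "Z \<le> b1" using ac p'props b1p by linarith
  moreover have "b2 + Z \<le> n" using b2p q'props ac by linarith
  ultimately show ?thesis using b12 small left right by blast
qed

lemma calm_exists:
  assumes cnt: "2*Z + card {b. bdry \<sigma> n b} * (2*G+1) < card {y. y < n \<and> \<sigma> y = v}"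
  shows "\<exists>y. calm \<sigma> n G y \<and> Z \<le> y \<and> y + Z \<le> n \<and> \<sigma> y = v"
proof (rule ccontr)
  assume no: "\<not> ?thesis"
  define Bd where "Bd = {b. bdry \<sigma> n b}"
  have fBd: "finite Bd" unfolding Bd_def bdry_def by (rule finite_subset[of _ "{..n}"]) auto
  have sub: "{y. y < n \<and> \<sigma> y = v} \<subseteq> {..<Z} \<union> {n-Z..<n} \<union> (\<Union>b\<in>Bd. {b-G..b+G})"
  proof
    fix y assume y: "y \<in> {y. y < n \<and> \<sigma> y = v}"
    show "y \<in> {..<Z} \<union> {n-Z..<n} \<union> (\<Union>b\<in>Bd. {b-G..b+G})"
    proof (cases "Z \<le> y \<and> y + Z \<le> n")
      case True
      then have "\<not> calm \<sigma> n G y" using no y by auto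
      then obtain b where "bdry \<sigma> n b" "\<not> (y + G < b)" "\<not> (b + G < y)" unfolding calm_def by blast
      then have "b \<in> Bd" "y \<in> {b-G..b+G}" unfolding Bd_def by auto
      then show ?thesis by blast
    next
      case False
      then show ?thesis using y by auto
    qed
  qed
  have c0: "card {n-Z..<n} \<le> Z" by simp
  have c1: "card ({..<Z} \<union> {n-Z..<n}) \<le> 2*Z"
    using card_Un_le[of "{..<Z}" "{n-Z..<n}"] c0 by simp
  have "card (\<Union>b\<in>Bd. {b-G..b+G}) \<le> (\<Sum>b\<in>Bd. card {b-G..b+G})" by (rule card_UN_le[OF fBd])
  also have "(\<Sum>b\<in>Bd. card {b-G..b+G}) \<le> (\<Sum>b\<in>Bd. 2*G+1)" by (rule sum_mono) simp
  also have "(\<Sum>b\<in>Bd. 2*G+1) = card Bd * (2*G+1)" by simp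
  finally have c2: "card (\<Union>b\<in>Bd. {b-G..b+G}) \<le> card Bd * (2*G+1)" .
  have "card {y. y < n \<and> \<sigma> y = v} \<le> card ({..<Z} \<union> {n-Z..<n} \<union> (\<Union>b\<in>Bd. {b-G..b+G}))"
    by (rule card_mono[OF _ sub]) (simp add: fBd)
  also have "\<dots> \<le> card ({..<Z} \<union> {n-Z..<n}) + card (\<Union>b\<in>Bd. {b-G..b+G})" by (rule card_Un_le)
  finally have "card {y. y < n \<and> \<sigma> y = v} \<le> 2*Z + card Bd * (2*G+1)" using c1 c2 by linarith
  then show False using cnt unfolding Bd_def by simp
qed

definition GRx :: "nat \<Rightarrow> nat \<Rightarrow> nat \<Rightarrow> nat \<Rightarrow> bool" where
  "GRx \<beta> \<gamma> j B \<longleftrightarrow> B*3^(Suc j) + 2*3^j < \<beta> \<and> \<beta> \<le> B*3^(Suc j) + 2*3^j + 2*3^(Suc j) \<and>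
     \<beta> + \<gamma> + 2*3^(j-4) \<le> Suc B * 3^(Suc j) + hh j \<and> Suc B * 3^(Suc j) + hh j \<le> \<beta> + 2*3^(Suc j)"

definition GLx :: "nat \<Rightarrow> nat \<Rightarrow> nat \<Rightarrow> nat \<Rightarrow> bool" where
  "GLx \<beta> \<gamma> j B \<longleftrightarrow> \<beta> + \<gamma> \<le> B*3^(Suc j) + 2*3^j + hh j \<and> B*3^(Suc j) + 2*3^j + hh j \<le> \<beta> + 3^(Suc j) \<and>
     B*3^(Suc j) + 3^j + 2*3^(j-4) < \<beta> \<and> \<beta> \<le> B*3^(Suc j) + 3^j + 3^(Suc j)"

lemma coverage:
  assumes j4: "4 \<le> j" and g: "\<gamma> \<le> 3^(j-4)" and bb: "3^(Suc (Suc j)) \<le> \<beta>"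
  shows "(\<exists>B. GRx \<beta> \<gamma> j B) \<or> (\<exists>B. GLx \<beta> \<gamma> j B) \<or> (\<exists>B. GRx \<beta> \<gamma> (Suc j) B) \<or> (\<exists>B. GLx \<beta> \<gamma> (Suc j) B)"
proof -
  define T where "T = (3::nat)^(j-4)"
  have T1: "1 \<le> T" unfolding T_def by simp
  have pj: "(3::nat)^j = 81*T"
  proof -
    have "(3::nat)^j = 3^(4 + (j-4))" using j4 by simp
    also have "\<dots> = 81 * T" unfolding T_def by (simp add: power_add)
    finally show ?thesis .
  qed
  have p1: "(3::nat)^(Suc j) = 243*T" using pj by simp
  have p2: "(3::nat)^(Suc (Suc j)) = 729*T" using pj by simp
  have p3: "(3::nat)^(Suc j - 4) = 3*T"
  proof -
    have "Suc j - 4 = Suc (j - 4)" using j4 by simp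
    then show ?thesis unfolding T_def by simp
  qed
  have h0: "2 * hh j + 1 = 81*T" using hh_eq[of j] pj by simp
  have h1: "2 * hh (Suc j) + 1 = 243*T" using hh_eq[of "Suc j"] p1 by simp
  have gT: "\<gamma> \<le> T" using g unfolding T_def .
  have p4: "(3::nat)^(j-4) = T" unfolding T_def ..
  define M0 where "M0 = 729*T"
  define M1 where "M1 = 243*T"
  define B0 where "B0 = \<beta> div M0"
  define a where "a = \<beta> mod M0"
  define B1 where "B1 = \<beta> div M1"
  define a' where "a' = \<beta> mod M1"
  have M0p: "0 < M0" "0 < M1" unfolding M0_def M1_def using T1 by auto
  have b0: "\<beta> = B0 * M0 + a" "a < M0" unfolding B0_def a_def using M0p by auto
  have b1: "\<beta> = B1 * M1 + a'" "a' < M1" unfolding B1_def a'_def using M0p by auto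
  have "M0 = 3 * M1" unfolding M0_def M1_def by simp
  then have dv: "M1 dvd M0" by simp
  have aa: "a' = a mod M1" unfolding a'_def a_def using dv by (simp add: mod_mod_cancel)
  define P0 where "P0 = B0 * T"
  define P1 where "P1 = B1 * T"
  have e0: "B0 * 3^(Suc (Suc j)) = 729 * P0" "Suc B0 * 3^(Suc (Suc j)) = 729 * P0 + 729 * T"
    "\<beta> = 729 * P0 + a" unfolding P0_def using p2 b0 unfolding M0_def by (auto simp: algebra_simps)
  have e1: "B1 * 3^(Suc j) = 243 * P1" "Suc B1 * 3^(Suc j) = 243 * P1 + 243 * T"
    "\<beta> = 243 * P1 + a'" unfolding P1_def using p1 b1 unfolding M1_def by (auto simp: algebra_simps)
  have aM: "a < 729*T" "a' < 243*T" using b0 b1 unfolding M0_def M1_def by auto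
  show ?thesis
  proof (cases "486*T < a")
    case True
    have "GRx \<beta> \<gamma> (Suc j) B0" unfolding GRx_def using e0 True aM h1 gT p1 p2 p3 T1 by (intro conjI; linarith)
    then show ?thesis by blast
  next
    case F1: False
    show ?thesis
    proof (cases "249*T < a")
      case True
      have "GLx \<beta> \<gamma> (Suc j) B0" unfolding GLx_def using e0 True F1 aM h1 gT p1 p2 p3 T1 by (intro conjI; linarith)
      then show ?thesis by blast
    next
      case F2: False
      show ?thesis
      proof (cases "a + \<gamma> + 6*T \<le> hh (Suc j)")
        case True
        have "1 \<le> B0"
        proof (rule ccontr)
          assume "\<not> 1 \<le> B0"
          then have "B0 = 0" by simp
          then show False using b0 bb p2 unfolding M0_def by simp
        qed
        then obtain B' where B': "B0 = Suc B'" using not0_implies_Suc by fastforce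
        have e0': "B' * 3^(Suc (Suc j)) + 729 * T = 729 * P0" "Suc B' * 3^(Suc (Suc j)) = 729 * P0"
          using e0 B' p2 by (auto simp: algebra_simps)
        have "GRx \<beta> \<gamma> (Suc j) B'" unfolding GRx_def using e0 e0' True F1 F2 aM h1 gT p1 p2 p3 T1 by (intro conjI; linarith)
        then show ?thesis by blast
      next
        case F3: False
        show ?thesis
        proof (cases "a < 243*T")
          case True
          then have a'a: "a' = a" using aa unfolding M1_def by simp
          show ?thesis
          proof (cases "162*T < a'")
            case True
            have "GRx \<beta> \<gamma> j B1" unfolding GRx_def using e1 True a'a aM h0 gT pj p1 T1 j4 p2 p4 by (intro conjI; linarith)
            then show ?thesis by blast
          next
            case False
            have "GLx \<beta> \<gamma> j B1" unfolding GLx_def using e1 False a'a F3 aM h0 h1 gT pj p1 T1 j4 p2 p4 by (intro conjI; linarith)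
            then show ?thesis by blast
          qed
        next
          case False
          then have a'a: "a' + 243*T = a" using aa F2 unfolding M1_def
          proof -
            have "a mod (243*T) = (a - 243*T) mod (243*T)" using False by (simp add: le_mod_geq)
            also have "\<dots> = a - 243*T" using F2 aM by (intro mod_less) linarith
            finally show ?thesis using aa False unfolding M1_def by simp
          qed
          have "1 \<le> B1"
          proof (rule ccontr)
            assume "\<not> 1 \<le> B1"
            then have "B1 = 0" by simp
            then show False using b1 bb p2 unfolding M1_def by simp
          qed
          then obtain B' where B': "B1 = Suc B'" using not0_implies_Suc by fastforce
          have e1': "B' * 3^(Suc j) + 243 * T = 243 * P1" "Suc B' * 3^(Suc j) = 243 * P1"
            using e1 B' p1 by (auto simp: algebra_simps)
          have "GRx \<beta> \<gamma> j B'" unfolding GRx_def using e1 e1' a'a F2 aM h0 gT pj p1 T1 j4 p2 p4 by (intro conjI; linarith)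
          then show ?thesis by blast
        qed
      qed
    qed
  qed
qed

lemma two_pow_lt: "a < b \<Longrightarrow> 2 * (3::nat)^a \<le> 3^b"
proof -
  assume "a < b"
  then have "(3::nat)^(Suc a) \<le> 3^b" by (intro power_increasing) auto
  then show ?thesis by simp
qed

lemma pow_mono3: "a \<le> b \<Longrightarrow> (3::nat)^a \<le> 3^b"
  by (intro power_increasing) auto

lemma lev_far:
  assumes "l i = j0 + 5*i \<or> l i = Suc (j0 + 5*i)" "l t = j0 + 5*t \<or> l t = Suc (j0 + 5*t)" "i \<noteq> t"
  shows "l i + 4 \<le> l t \<or> l t + 4 \<le> l i"
  using assms by auto

lemma gadget_family:
  assumes j0: "4 \<le> j0" and g: "\<gamma> \<le> 3^(j0-4)" and bb: "3^(j0 + 10*N + 2) \<le> \<beta>"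
    and kk: "j0 + 10*N < k" and nn: "2*(\<beta> + 3^(j0+10*N)) < 3^k"
  shows "\<exists>(J::nat set) P Q. finite J \<and> card J = N \<and>
     (\<forall>t\<in>J. P t < \<beta> \<and> \<beta> \<le> P t + 3^(j0+10*N) \<and> \<beta> + \<gamma> \<le> Q t \<and> Q t \<le> \<beta> + 3^(j0+10*N) \<and>
        (2*P t, 2*Q t) \<in> G_E k) \<and>
     (\<forall>i\<in>J. \<forall>t\<in>J. i \<noteq> t \<longrightarrow> (2*P i, 2*Q t) \<notin> G_E k \<or> (2*P t, 2*Q i) \<notin> G_E k)"
proof -
  define W where "W = (3::nat)^(j0+10*N)"
  define jt where "jt = (\<lambda>t::nat. j0 + 5*t)"
  have cov: "(\<exists>B. GRx \<beta> \<gamma> (jt t) B) \<or> (\<exists>B. GLx \<beta> \<gamma> (jt t) B) \<or>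
       (\<exists>B. GRx \<beta> \<gamma> (Suc (jt t)) B) \<or> (\<exists>B. GLx \<beta> \<gamma> (Suc (jt t)) B)" if t: "t < 2*N" for t
  proof (rule coverage)
    show "4 \<le> jt t" unfolding jt_def using j0 by simp
    have "(3::nat)^(j0 - 4) \<le> 3^(jt t - 4)" unfolding jt_def by (intro pow_mono3) simp
    then show "\<gamma> \<le> 3^(jt t - 4)" using g by linarith
    have "Suc (Suc (jt t)) \<le> j0 + 10*N + 2" unfolding jt_def using t by simp
    then show "3^(Suc (Suc (jt t))) \<le> \<beta>" using bb pow_mono3 le_trans by blast
  qed
  define SR where "SR = {t. t < 2*N \<and> ((\<exists>B. GRx \<beta> \<gamma> (jt t) B) \<or> (\<exists>B. GRx \<beta> \<gamma> (Suc (jt t)) B))}"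
  define SL where "SL = {t. t < 2*N \<and> ((\<exists>B. GLx \<beta> \<gamma> (jt t) B) \<or> (\<exists>B. GLx \<beta> \<gamma> (Suc (jt t)) B))}"
  have un: "{..<2*N} \<subseteq> SR \<union> SL" unfolding SR_def SL_def using cov by auto
  have fSR: "finite SR" "finite SL" unfolding SR_def SL_def by auto
  have "2*N \<le> card (SR \<union> SL)" using card_mono[OF _ un] fSR by simp
  also have "\<dots> \<le> card SR + card SL" by (rule card_Un_le)
  finally have "N \<le> card SR \<or> N \<le> card SL" by linarith
  then show ?thesis
  proof
    assume "N \<le> card SR"
    then obtain J where J: "J \<subseteq> SR" "card J = N" using obtain_subset_with_card_n by blast
    have fJ: "finite J" using J(1) fSR finite_subset by blast
    define lev where "lev = (\<lambda>t. if (\<exists>B. GRx \<beta> \<gamma> (jt t) B) then jt t else Suc (jt t))"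
    define Bt where "Bt = (\<lambda>t. SOME B. GRx \<beta> \<gamma> (lev t) B)"
    define P where "P = (\<lambda>t. Bt t * 3^(Suc (lev t)) + 2*3^(lev t))"
    define Q where "Q = (\<lambda>t. Suc (Bt t) * 3^(Suc (lev t)) + hh (lev t))"
    have levj: "lev t = j0 + 5*t \<or> lev t = Suc (j0 + 5*t)" for t unfolding lev_def jt_def by auto
    have GR: "GRx \<beta> \<gamma> (lev t) (Bt t)" if "t \<in> J" for t
    proof -
      have "\<exists>B. GRx \<beta> \<gamma> (lev t) B" using that J(1) unfolding SR_def lev_def by auto
      then show ?thesis unfolding Bt_def by (rule someI_ex)
    qed
    have levb: "lev t + 4 \<le> j0 + 10*N" if "t \<in> J" for t
      using that J(1) levj[of t] unfolding SR_def by auto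
    have props: "P t < \<beta>" "\<beta> \<le> P t + W" "\<beta> + \<gamma> + 2*3^(lev t - 4) \<le> Q t" "Q t \<le> \<beta> + W" if tJ: "t \<in> J" for t
    proof -
      have w: "2 * 3^(Suc (lev t)) \<le> W" unfolding W_def using levb[OF tJ] by (intro two_pow_lt) simp
      have g1: "Bt t*3^(Suc (lev t)) + 2*3^(lev t) < \<beta>" and g2: "\<beta> \<le> Bt t*3^(Suc (lev t)) + 2*3^(lev t) + 2*3^(Suc (lev t))"
        and g3: "\<beta> + \<gamma> + 2*3^(lev t-4) \<le> Suc (Bt t) * 3^(Suc (lev t)) + hh (lev t)"
        and g4: "Suc (Bt t) * 3^(Suc (lev t)) + hh (lev t) \<le> \<beta> + 2*3^(Suc (lev t))"
        using GR[OF tJ] unfolding GRx_def by blast+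
      show "P t < \<beta>" using g1 unfolding P_def .
      show "\<beta> \<le> P t + W" using g2 w unfolding P_def by linarith
      show "\<beta> + \<gamma> + 2*3^(lev t - 4) \<le> Q t" using g3 unfolding Q_def .
      show "Q t \<le> \<beta> + W" using g4 w unfolding Q_def by linarith
    qed
    have adj: "(2*P t, 2*Q t) \<in> G_E k" if tJ: "t \<in> J" for t
    proof -
      let ?l = "lev t" and ?B = "Bt t"
      have e1: "P t = (3*?B+2) * 3^?l + 0" unfolding P_def by (simp add: algebra_simps)
      have e2: "Q t = Suc (3*?B+2) * 3^?l + hh ?l" unfolding Q_def by (simp add: algebra_simps)
      have "(2 * ((3*?B+2) * 3^?l + 0), 2 * (Suc (3*?B+2) * 3^?l + hh ?l)) \<in> G_E k"
      proof (rule adj_intro)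
        show "?l < k" using levb[OF tJ] kk by simp
        show "(0::nat) < 3^?l" "dig01 ?l 0" "hh ?l < 3^?l" "dig01 ?l (hh ?l)"
          by (simp_all add: dig01_0 hh_lt dig01_hh)
        have "P t < \<beta>" using props[OF tJ] by linarith
        then show "2 * ((3*?B+2) * 3^?l + 0) < 3^k" using nn unfolding e1[symmetric] W_def by arith
        have "Q t \<le> \<beta> + W" using props[OF tJ] by linarith
        then show "2 * (Suc (3*?B+2) * 3^?l + hh ?l) < 3^k" using nn unfolding e2[symmetric] W_def by arith
      qed
      then show ?thesis using e1 e2 by simp
    qed
    have cr: "(2*P i, 2*Q t) \<notin> G_E k" if iJ: "i \<in> J" and tJ: "t \<in> J" and lt: "lev i + 4 \<le> lev t" for i t
    proof (rule nonadj)
      show "(P i div 3^(lev i)) mod 3 = 2" unfolding P_def using digit2[of 0 "lev i" "Bt i"] by simp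
      have "3^(lev i) \<le> (3::nat)^(lev t - 4)" using lt by (intro pow_mono3) simp
      then show "P i + 2 * 3^(lev i) \<le> Q t \<or> Q t + 2 * 3^(lev i) \<le> P i"
        using props[OF iJ] props[OF tJ] by linarith
    qed
    have cross: "\<forall>i\<in>J. \<forall>t\<in>J. i \<noteq> t \<longrightarrow> (2*P i, 2*Q t) \<notin> G_E k \<or> (2*P t, 2*Q i) \<notin> G_E k"
    proof (intro ballI impI)
      fix i t assume it: "i \<in> J" "t \<in> J" "i \<noteq> t"
      have "lev i + 4 \<le> lev t \<or> lev t + 4 \<le> lev i" by (rule lev_far[OF levj levj it(3)])
      then show "(2*P i, 2*Q t) \<notin> G_E k \<or> (2*P t, 2*Q i) \<notin> G_E k"
        using cr[OF it(1) it(2)] cr[OF it(2) it(1)] by blast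
    qed
    have props5: "\<beta> + \<gamma> \<le> Q t" if tJ: "t \<in> J" for t using props(3)[OF tJ] by linarith
    show ?thesis
      apply (rule exI[of _ J], rule exI[of _ P], rule exI[of _ Q])
      using fJ J(2) props props5 adj cross unfolding W_def by (auto simp del: One_nat_def)
  next
    assume "N \<le> card SL"
    then obtain J where J: "J \<subseteq> SL" "card J = N" using obtain_subset_with_card_n by blast
    have fJ: "finite J" using J(1) fSR finite_subset by blast
    define lev where "lev = (\<lambda>t. if (\<exists>B. GLx \<beta> \<gamma> (jt t) B) then jt t else Suc (jt t))"
    define Bt where "Bt = (\<lambda>t. SOME B. GLx \<beta> \<gamma> (lev t) B)"
    define P where "P = (\<lambda>t. Bt t * 3^(Suc (lev t)) + 3^(lev t))"
    define Q where "Q = (\<lambda>t. Bt t * 3^(Suc (lev t)) + 2*3^(lev t) + hh (lev t))"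
    have levj: "lev t = j0 + 5*t \<or> lev t = Suc (j0 + 5*t)" for t unfolding lev_def jt_def by auto
    have GL: "GLx \<beta> \<gamma> (lev t) (Bt t)" if "t \<in> J" for t
    proof -
      have "\<exists>B. GLx \<beta> \<gamma> (lev t) B" using that J(1) unfolding SL_def lev_def by auto
      then show ?thesis unfolding Bt_def by (rule someI_ex)
    qed
    have levb: "lev t + 4 \<le> j0 + 10*N" if "t \<in> J" for t
      using that J(1) levj[of t] unfolding SL_def by auto
    have props: "P t + 2*3^(lev t - 4) < \<beta>" "\<beta> \<le> P t + W" "\<beta> + \<gamma> \<le> Q t" "Q t \<le> \<beta> + W" if tJ: "t \<in> J" for t
    proof -
      have w: "3^(Suc (lev t)) \<le> W" unfolding W_def using levb[OF tJ] by (intro pow_mono3) simp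
      have g1: "\<beta> + \<gamma> \<le> Bt t*3^(Suc (lev t)) + 2*3^(lev t) + hh (lev t)"
        and g2: "Bt t*3^(Suc (lev t)) + 2*3^(lev t) + hh (lev t) \<le> \<beta> + 3^(Suc (lev t))"
        and g3: "Bt t*3^(Suc (lev t)) + 3^(lev t) + 2*3^(lev t - 4) < \<beta>"
        and g4: "\<beta> \<le> Bt t*3^(Suc (lev t)) + 3^(lev t) + 3^(Suc (lev t))"
        using GL[OF tJ] unfolding GLx_def by blast+
      show "P t + 2*3^(lev t - 4) < \<beta>" using g3 unfolding P_def .
      show "\<beta> \<le> P t + W" using g4 w unfolding P_def by linarith
      show "\<beta> + \<gamma> \<le> Q t" using g1 unfolding Q_def .
      show "Q t \<le> \<beta> + W" using g2 w unfolding Q_def by linarith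
    qed
    have adj: "(2*P t, 2*Q t) \<in> G_E k" if tJ: "t \<in> J" for t
    proof -
      let ?l = "lev t" and ?B = "Bt t"
      have e1: "P t = (3*?B+1) * 3^?l + 0" unfolding P_def by (simp add: algebra_simps)
      have e2: "Q t = Suc (3*?B+1) * 3^?l + hh ?l" unfolding Q_def by (simp add: algebra_simps)
      have "(2 * ((3*?B+1) * 3^?l + 0), 2 * (Suc (3*?B+1) * 3^?l + hh ?l)) \<in> G_E k"
      proof (rule adj_intro)
        show "?l < k" using levb[OF tJ] kk by simp
        show "(0::nat) < 3^?l" "dig01 ?l 0" "hh ?l < 3^?l" "dig01 ?l (hh ?l)"
          by (simp_all add: dig01_0 hh_lt dig01_hh)
        have "P t < \<beta>" using props[OF tJ] by linarith
        then show "2 * ((3*?B+1) * 3^?l + 0) < 3^k" using nn unfolding e1[symmetric] W_def by arith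
        have "Q t \<le> \<beta> + W" using props[OF tJ] by linarith
        then show "2 * (Suc (3*?B+1) * 3^?l + hh ?l) < 3^k" using nn unfolding e2[symmetric] W_def by arith
      qed
      then show ?thesis using e1 e2 by simp
    qed
    have cr: "(2*P t, 2*Q i) \<notin> G_E k" if iJ: "i \<in> J" and tJ: "t \<in> J" and lt: "lev i + 4 \<le> lev t" for i t
    proof -
      have "(2*Q i, 2*P t) \<notin> G_E k"
      proof (rule nonadj)
        show "(Q i div 3^(lev i)) mod 3 = 2" unfolding Q_def using digit2[where s="hh (lev i)" and B="Bt i" and j="lev i", OF hh_lt] by simp
        have "3^(lev i) \<le> (3::nat)^(lev t - 4)" using lt by (intro pow_mono3) simp
        then show "Q i + 2 * 3^(lev i) \<le> P t \<or> P t + 2 * 3^(lev i) \<le> Q i"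
          using props[OF iJ] props[OF tJ] by linarith
      qed
      then show ?thesis using G_E_sym by blast
    qed
    have cross: "\<forall>i\<in>J. \<forall>t\<in>J. i \<noteq> t \<longrightarrow> (2*P i, 2*Q t) \<notin> G_E k \<or> (2*P t, 2*Q i) \<notin> G_E k"
    proof (intro ballI impI)
      fix i t assume it: "i \<in> J" "t \<in> J" "i \<noteq> t"
      have "lev i + 4 \<le> lev t \<or> lev t + 4 \<le> lev i" by (rule lev_far[OF levj levj it(3)])
      then show "(2*P i, 2*Q t) \<notin> G_E k \<or> (2*P t, 2*Q i) \<notin> G_E k"
        using cr[OF it(1) it(2)] cr[OF it(2) it(1)] by blast
    qed
    have props5: "P t < \<beta>" if tJ: "t \<in> J" for t using props(1)[OF tJ] by linarith
    show ?thesis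
      apply (rule exI[of _ J], rule exI[of _ P], rule exI[of _ Q])
      using fJ J(2) props props5 adj cross unfolding W_def by (auto simp del: One_nat_def)
  qed
qed

lemma lin_lt_pow3: "3 * C + 2 < (3::nat)^(C + 9)"
proof -
  have "C < 2^C" by (rule less_exp)
  also have "(2::nat)^C \<le> 3^C" by (rule power_mono) auto
  finally have "C < 3^C" .
  moreover have "(3::nat)^(C+9) = 3^C * 19683" by (simp add: power_add)
  ultimately show ?thesis by linarith
qed

theorem theorem17:
  shows "\<forall>r::nat. \<exists>k\<ge>1. r < clique_width (G_V k) (G_E k)"
proof
  fix r :: nat
  define N where "N = Suc r"
  define C where "C = 3*N"
  define Ee where "Ee = 10*N + 10"
  define k where "k = Ee * (C*C + 2) + C + 10"
  have k1: "1 \<le> k" unfolding k_def by simp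
  have "r < clique_width (G_V k) (G_E k)"
  proof (rule ccontr)
    assume "\<not> r < clique_width (G_V k) (G_E k)"
    then have cr: "clique_width (G_V k) (G_E k) < N" unfolding N_def by simp
    define c where "c = clique_width (G_V k) (G_E k)"
    obtain lab where cwc: "cw_constructible c (G_V k) (G_E k) lab" using cw_least unfolding c_def by blast
    have inv: "cwInv c (G_V k) (G_E k) lab" by (rule cw_inv[OF cwc])
    define n where "n = (3::nat)^k"
    define m where "m = (3::nat)^(k-1)"
    have nm: "n = 3 * m" unfolding n_def m_def using k1 by (metis Suc_diff_1 less_le_trans power_Suc zero_less_one)
    have cardV: "card (G_V k) = n" unfolding G_V_def n_def by simp
    have "1 \<le> m" unfolding m_def by simp
    moreover have "m \<le> card (G_V k)" using cardV nm by simp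
    ultimately have "1 \<le> m \<and> m \<le> card (G_V k)" by simp
    then obtain X where X: "X \<subseteq> G_V k" "m \<le> card X" "card X < 2*m" "goodX c (G_V k) (G_E k) lab X"
      using inv unfolding cwInv_def by blast
    define \<sigma> where "\<sigma> = (\<lambda>y. y \<in> X)"
    define Bd where "Bd = {x. x + 1 < 3^k \<and> (x \<in> X) \<noteq> (x + 1 \<in> X)}"
    have Bdeq: "bdry \<sigma> n b \<longleftrightarrow> b \<in> Bd" for b unfolding bdry_def Bd_def \<sigma>_def n_def by simp
    have fBd: "finite Bd" unfolding Bd_def by (rule finite_subset[of _ "{..<3^k}"]) auto
    have cN: "c < N" using cr unfolding c_def .
    show False
    proof (cases "3 * N \<le> card Bd")
      case True
      then show False using many_boundaries[OF X(4) X(1) cN] unfolding Bd_def by blast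
    next
      case False
      then have cB: "card Bd < C" unfolding C_def by simp
      have Ee1: "1 \<le> Ee" unfolding Ee_def by simp
      obtain t where t: "t \<le> C*C" and band0: "\<forall>x\<in>Bd. \<forall>y\<in>Bd. x < y \<longrightarrow> y - x < 3^(Ee*t) \<or> 3^(Ee*(Suc t)) \<le> y - x"
        using band_exists[OF fBd cB Ee1] by blast
      define G where "G = (3::nat)^(Ee*t)"
      define Z where "Z = (3::nat)^(Ee*(Suc t))"
      have band: "\<forall>x y. bdry \<sigma> n x \<and> bdry \<sigma> n y \<and> x < y \<longrightarrow> y - x < G \<or> Z \<le> y - x"
        using band0 unfolding Bdeq G_def Z_def by blast
      have ZG0: "Z = G * 3^Ee" unfolding Z_def G_def by (simp add: power_add[symmetric] algebra_simps)
      have G1: "1 \<le> G" unfolding G_def by simp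
      have e9: "(3::nat)^9 \<le> 3^Ee" unfolding Ee_def by (intro power_increasing) auto
      have "G * 3^9 \<le> G * 3^Ee" by (rule mult_le_mono2[OF e9])
      then have "19683 * G \<le> Z" using ZG0 by simp
      then have ZG: "3*G + 2 \<le> Z" using G1 by linarith
      have GZ: "G \<le> Z" using ZG by linarith
      have Zb: "Z \<le> 3^(Ee*(C*C+1))" unfolding Z_def using t by (intro power_increasing) auto
      have mb: "m = 3^(Ee*(C*C+1)) * 3^(Ee + C + 9)"
        unfolding m_def k_def by (simp add: power_add[symmetric] algebra_simps)
      have mC: "(3*C+2) * 3^(Ee*(C*C+1)) < m"
      proof -
        have "(3*C+2) < (3::nat)^(C+9)" by (rule lin_lt_pow3)
        also have "(3::nat)^(C+9) \<le> 3^(Ee + C + 9)" by (intro power_increasing) auto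
        finally have lt: "(3*C+2) < (3::nat)^(Ee + C + 9)" .
        have "(3*C+2) * 3^(Ee*(C*C+1)) < 3^(Ee + C + 9) * (3::nat)^(Ee*(C*C+1))"
          by (rule mult_less_mono1[OF lt]) simp
        then show ?thesis unfolding mb by (simp add: mult.commute)
      qed
      have cnt: "2*Z + card {b. bdry \<sigma> n b} * (2*G+1) < m"
      proof -
        have eqB: "{b. bdry \<sigma> n b} = Bd" using Bdeq by blast
        have s1: "card Bd * (2*G+1) \<le> C * (2*Z+1)" using cB GZ by (intro mult_le_mono) auto
        have s2: "C \<le> C * Z" using G1 GZ by simp
        have s3: "C * (2*Z+1) = 2*(C*Z) + C" "(3*C+2)*Z = 3*(C*Z) + 2*Z" by (simp_all add: algebra_simps)
        have "2*Z + card Bd * (2*G+1) \<le> (3*C+2) * Z" using s1 s2 s3 by linarith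
        also have "\<dots> \<le> (3*C+2) * 3^(Ee*(C*C+1))" using Zb by (rule mult_le_mono2)
        finally show ?thesis using mC eqB by simp
      qed
      have XT: "{y. y < n \<and> \<sigma> y = True} = X" using X(1) unfolding \<sigma>_def G_V_def n_def by auto
      have XF: "{y. y < n \<and> \<sigma> y = False} = G_V k - X" unfolding \<sigma>_def G_V_def n_def by auto
      have cXT: "m \<le> card {y. y < n \<and> \<sigma> y = True}" using XT X(2) by simp
      have cXF: "m < card {y. y < n \<and> \<sigma> y = False}"
      proof -
        have "card (G_V k - X) = n - card X" using X(1) cardV by (simp add: card_Diff_subset finite_subset G_V_def)
        then show ?thesis using XF X(3) nm by simp
      qed
      obtain p where p: "calm \<sigma> n G p" "Z \<le> p" "p + Z \<le> n" "\<sigma> p = True"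
        using calm_exists[of Z \<sigma> n G True] cnt cXT by auto
      obtain q where q: "calm \<sigma> n G q" "Z \<le> q" "q + Z \<le> n" "\<sigma> q = False"
        using calm_exists[of Z \<sigma> n G False] cnt cXF by auto
      have pq: "\<sigma> p \<noteq> \<sigma> q" using p(4) q(4) by simp
      obtain b1 b2 where bb: "b1 \<le> b2" "b2 < b1 + G" "Z \<le> b1" "b2 + Z \<le> n" "\<sigma> b1 \<noteq> \<sigma> (Suc b2)"
        and left: "\<forall>y. b1 < y + Z \<and> y \<le> b1 \<longrightarrow> \<sigma> y = \<sigma> b1"
        and right: "\<forall>y. b2 < y \<and> y \<le> b2 + Z \<longrightarrow> \<sigma> y = \<sigma> (Suc b2)"
        using find_flip[OF band ZG G1 p(1-3) q(1-3) pq] by blast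
      define \<beta> where "\<beta> = b1 div 2 + 1"
      have dv2: "2 * (b1 div 2) \<le> b1" "b1 \<le> 2 * (b1 div 2) + 1" by linarith+
      have b2b: "2 * \<beta> = 2 * (b1 div 2) + 2" unfolding \<beta>_def by simp
      define j0 where "j0 = Ee*t + 4"
      define W where "W = (3::nat)^(j0 + 10*N)"
      have WZ: "2*W + 3 \<le> Z"
      proof -
        have ex: "Ee * Suc t = (j0 + 10*N) + 6" unfolding j0_def Ee_def by (simp add: algebra_simps)
        have "Z = W * 3^6" unfolding Z_def W_def ex by (simp only: power_add)
        moreover have "1 \<le> W" unfolding W_def by simp
        ultimately show ?thesis by simp
      qed
      have gf1: "4 \<le> j0" unfolding j0_def by simp
      have gf2: "G \<le> 3^(j0-4)" unfolding j0_def G_def by simp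
      have gf3: "3^(j0 + 10*N + 2) \<le> \<beta>"
      proof -
        have ex: "Ee * Suc t = (j0 + 10*N + 2) + 4" unfolding j0_def Ee_def by (simp add: algebra_simps)
        have "Z = 3^(j0 + 10*N + 2) * 3^4" unfolding Z_def ex by (simp only: power_add)
        then have "2 * 3^(j0 + 10*N + 2) \<le> Z" by simp
        then show ?thesis unfolding \<beta>_def using bb(3) by linarith
      qed
      have gf4: "j0 + 10*N < k"
      proof -
        have a: "Ee * t \<le> Ee * (C*C)" using t by (intro mult_le_mono2) simp
        have b: "Ee * (C*C + 2) = Ee * (C*C) + 2 * Ee" by (simp add: algebra_simps)
        have c: "Ee = 10*N + 10" by (rule Ee_def)
        show ?thesis unfolding j0_def k_def using a b c by linarith
      qed
      have gf5: "2*(\<beta> + 3^(j0+10*N)) < 3^k"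
      proof -
        have "2*(\<beta> + W) = 2 * \<beta> + 2 * W" by simp
        then show ?thesis using WZ bb(1) bb(4) dv2 b2b unfolding W_def[symmetric] n_def[symmetric] by linarith
      qed
      obtain J :: "nat set" and P Q where fJ: "finite J" and cJ: "card J = N"
        and fam: "\<forall>t\<in>J. P t < \<beta> \<and> \<beta> \<le> P t + W \<and> \<beta> + G \<le> Q t \<and> Q t \<le> \<beta> + W \<and> (2*P t, 2*Q t) \<in> G_E k"
        and cross: "\<forall>i\<in>J. \<forall>t\<in>J. i \<noteq> t \<longrightarrow> (2*P i, 2*Q t) \<notin> G_E k \<or> (2*P t, 2*Q i) \<notin> G_E k"
        using gadget_family[OF gf1 gf2 gf3 gf4 gf5] unfolding W_def by blast
      have zP: "\<sigma> (2 * P t) = \<sigma> b1" "2 * P t < n" if tJ: "t \<in> J" for t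
      proof -
        have a1: "P t < \<beta>" "\<beta> \<le> P t + W" using fam tJ by auto
        have "b1 < 2 * P t + Z" "2 * P t \<le> b1" using a1 WZ dv2 unfolding \<beta>_def by linarith+
        moreover have "b1 < 2 * P t + Z \<and> 2 * P t \<le> b1 \<longrightarrow> \<sigma> (2 * P t) = \<sigma> b1" using left by blast
        ultimately show "\<sigma> (2 * P t) = \<sigma> b1" by blast
        show "2 * P t < n" using a1 bb WZ dv2 unfolding \<beta>_def by linarith
      qed
      have zQ: "\<sigma> (2 * Q t) = \<sigma> (Suc b2)" "2 * Q t < n" if tJ: "t \<in> J" for t
      proof -
        have a1: "\<beta> + G \<le> Q t" "Q t \<le> \<beta> + W" using fam tJ by auto
        have "b2 < 2 * Q t" "2 * Q t \<le> b2 + Z" using a1 WZ bb(1,2) dv2 unfolding \<beta>_def by linarith+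
        moreover have "b2 < 2 * Q t \<and> 2 * Q t \<le> b2 + Z \<longrightarrow> \<sigma> (2 * Q t) = \<sigma> (Suc b2)" using right by blast
        ultimately show "\<sigma> (2 * Q t) = \<sigma> (Suc b2)" by blast
        show "2 * Q t < n" using a1 bb WZ dv2 unfolding \<beta>_def by linarith
      qed
      have cJN: "c < card J" using cJ cN by simp
      show False
      proof (cases "\<sigma> b1")
        case True
        then have ns: "\<not> \<sigma> (Suc b2)" using bb(5) by simp
        have uw: "\<forall>j\<in>J. 2 * P j \<in> X \<and> 2 * Q j \<in> G_V k \<and> 2 * Q j \<notin> X \<and> (2 * P j, 2 * Q j) \<in> G_E k"
        proof
          fix j assume jJ: "j \<in> J"
          have "\<sigma> (2 * P j)" using zP(1)[OF jJ] True by simp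
          moreover have "\<not> \<sigma> (2 * Q j)" using zQ(1)[OF jJ] ns by simp
          moreover have "2 * Q j < n" by (rule zQ(2)[OF jJ])
          moreover have "(2 * P j, 2 * Q j) \<in> G_E k" using fam jJ by blast
          ultimately show "2 * P j \<in> X \<and> 2 * Q j \<in> G_V k \<and> 2 * Q j \<notin> X \<and> (2 * P j, 2 * Q j) \<in> G_E k"
            unfolding \<sigma>_def G_V_def n_def by simp
        qed
        show False by (rule distinct_contra[OF X(4) cJN fJ uw cross])
      next
        case False
        then have ns: "\<sigma> (Suc b2)" using bb(5) by simp
        have uw: "\<forall>j\<in>J. 2 * Q j \<in> X \<and> 2 * P j \<in> G_V k \<and> 2 * P j \<notin> X \<and> (2 * Q j, 2 * P j) \<in> G_E k"
        proof
          fix j assume jJ: "j \<in> J"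
          have "\<not> \<sigma> (2 * P j)" using zP(1)[OF jJ] False by simp
          moreover have "\<sigma> (2 * Q j)" using zQ(1)[OF jJ] ns by simp
          moreover have "2 * P j < n" by (rule zP(2)[OF jJ])
          moreover have "(2 * Q j, 2 * P j) \<in> G_E k" using fam jJ G_E_sym by blast
          ultimately show "2 * Q j \<in> X \<and> 2 * P j \<in> G_V k \<and> 2 * P j \<notin> X \<and> (2 * Q j, 2 * P j) \<in> G_E k"
            unfolding \<sigma>_def G_V_def n_def by simp
        qed
        have cross': "\<forall>i\<in>J. \<forall>t\<in>J. i \<noteq> t \<longrightarrow> (2*Q i, 2*P t) \<notin> G_E k \<or> (2*Q t, 2*P i) \<notin> G_E k"
          using cross G_E_sym by blast
        show False by (rule distinct_contra[OF X(4) cJN fJ uw cross'])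
      qed
    qed
  qed
  then show "\<exists>k\<ge>1. r < clique_width (G_V k) (G_E k)" using k1 by blast
qed


end
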